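(* Let $0<\eta\leq1$ be real and $d\geq1$ an integer. Let $F$ be a 3-graph and $A,B\subseteq V(F)$ with $A\cap B=\emptyset$, $|A|\geq 4d\,e^d/\eta^d$ and $|B|\geq d/\eta$. Assume that $A$ induces a clique in $F$ and $d(A,A,B)\geq\eta$. Then $F$ contains a tight path of the form $a_1a_2b_1a_3a_4b_2\dots a_{2d-1}a_{2d}b_da_{2d+1}a_{2d+2}$ with distinct vertices $a_i\in A$ ($i\in[2d+2]$) and $b_j\in B$ ($j\in[d]$).
   Context: A 3-graph is a 3-uniform hypergraph. A tight path with vertex sequence $v_1v_2\dots v_s$ has edges $\{v_i,v_{i+1},v_{i+2}\}$ for $i\in[s-2]$. For $A,B,C\subseteq V(F)$, $E(A,B,C)$ is the set of ordered triples $(a,b,c)\in A\times B\times C$ of distinct vertices with $abc\in E(F)$, and $d(A,B,C)=|E(A,B,C)|$ divided by the number of ordered triples of distinct vertices in $A\times B\times C$. *)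

theory Defs
  imports Complex_Main
begin

definition three_graph :: "'a set \<Rightarrow> 'a set set \<Rightarrow> bool" where
  "three_graph V E \<longleftrightarrow> finite V \<and> (\<forall>e\<in>E. e \<subseteq> V \<and> card e = 3)"

definition dist_triples :: "'a set \<Rightarrow> 'a set \<Rightarrow> 'a set \<Rightarrow> ('a \<times> 'a \<times> 'a) set" where
  "dist_triples X Y Z = {(x, y, z). x \<in> X \<and> y \<in> Y \<and> z \<in> Z \<and> x \<noteq> y \<and> y \<noteq> z \<and> x \<noteq> z}"

definition edge_triples :: "'a set set \<Rightarrow> 'a set \<Rightarrow> 'a set \<Rightarrow> 'a set \<Rightarrow> ('a \<times> 'a \<times> 'a) set" where
  "edge_triples E X Y Z = {(x, y, z). (x, y, z) \<in> dist_triples X Y Z \<and> {x, y, z} \<in> E}"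

definition density3 :: "'a set set \<Rightarrow> 'a set \<Rightarrow> 'a set \<Rightarrow> 'a set \<Rightarrow> real" where
  "density3 E X Y Z = real (card (edge_triples E X Y Z)) / real (card (dist_triples X Y Z))"

definition clique3 :: "'a set set \<Rightarrow> 'a set \<Rightarrow> bool" where
  "clique3 E A \<longleftrightarrow> (\<forall>x\<in>A. \<forall>y\<in>A. \<forall>z\<in>A. x \<noteq> y \<and> y \<noteq> z \<and> x \<noteq> z \<longrightarrow> {x, y, z} \<in> E)"

definition tight_path :: "'a set set \<Rightarrow> 'a list \<Rightarrow> bool" where
  "tight_path E vs \<longleftrightarrow> distinct vs \<and>
     (\<forall>i. i + 2 < length vs \<longrightarrow> {vs ! i, vs ! (i + 1), vs ! (i + 2)} \<in> E)"

end

theory Submission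
  imports Defs
begin



lemma cheb:
  fixes a b :: "'p \<Rightarrow> real"
  assumes "finite P" and "\<And>p q. p \<in> P \<Longrightarrow> q \<in> P \<Longrightarrow> (a p - a q) * (b p - b q) \<ge> 0"
  shows "(\<Sum>p\<in>P. a p) * (\<Sum>p\<in>P. b p) \<le> real (card P) * (\<Sum>p\<in>P. a p * b p)"
proof -
  have "0 \<le> (\<Sum>p\<in>P. \<Sum>q\<in>P. (a p - a q) * (b p - b q))"
    by (intro sum_nonneg) (simp add: assms)
  also have "\<dots> = (\<Sum>p\<in>P. \<Sum>q\<in>P. a p * b p + a q * b q - a p * b q - a q * b p)"
    by (simp add: algebra_simps)
  also have "\<dots> = 2 * real (card P) * (\<Sum>p\<in>P. a p * b p) - 2 * ((\<Sum>p\<in>P. a p) * (\<Sum>p\<in>P. b p))"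
    by (simp add: sum.distrib sum_subtractf sum_distrib_left sum_distrib_right sum.swap[of "\<lambda>p q. a q * b p"] algebra_simps)
  finally show ?thesis by simp
qed

lemma binom_rec:
  "real (x choose (k+1)) * (real k + 1) = real (x choose k) * (real x - real k)"
proof (cases "k \<le> x")
  case True
  have "(k+1) * (x choose (k+1)) = (x - k) * (x choose k)"
  proof (cases x)
    case 0 then show ?thesis using True by simp
  next
    case (Suc y)
    have "Suc k * (Suc y choose Suc k) = Suc y * (y choose k)" by (rule Suc_times_binomial)
    moreover have "(Suc y - k) * (Suc y choose k) = Suc y * (y choose k)"
      using binomial_absorb_comp[of "Suc y" k] by simp
    ultimately show ?thesis using Suc by simp
  qed
  then have "real ((k+1) * (x choose (k+1))) = real ((x - k) * (x choose k))" by simp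
  then show ?thesis using True by (simp add: of_nat_diff algebra_simps)
next
  case False
  then show ?thesis by (simp add: binomial_eq_0)
qed

lemma binom_sum_bound:
  fixes x :: "'p \<Rightarrow> nat"
  assumes "finite P" "P \<noteq> {}"
  defines "s \<equiv> (\<Sum>p\<in>P. real (x p)) / real (card P)"
  shows "real k \<le> s \<Longrightarrow> (\<Sum>p\<in>P. real (x p choose k)) \<ge> real (card P) * (\<Prod>i<k. (s - real i) / (real i + 1))"
proof (induction k)
  case 0
  then show ?case by simp
next
  case (Suc k)
  have N: "real (card P) > 0" using assms by auto
  have IH: "(\<Sum>p\<in>P. real (x p choose k)) \<ge> real (card P) * (\<Prod>i<k. (s - real i) / (real i + 1))"
    using Suc by simp
  have sk: "s - real k \<ge> 0" using Suc.prems by simp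
  have sumb: "(\<Sum>p\<in>P. real (x p) - real k) = real (card P) * (s - real k)"
    using N by (simp add: s_def sum_subtractf field_simps)
  have ch: "(\<Sum>p\<in>P. real (x p choose k)) * (\<Sum>p\<in>P. real (x p) - real k)
      \<le> real (card P) * (\<Sum>p\<in>P. real (x p choose k) * (real (x p) - real k))"
  proof (rule cheb[OF assms(1)])
    fix p q assume "p \<in> P" "q \<in> P"
    show "0 \<le> (real (x p choose k) - real (x q choose k)) * (real (x p) - real k - (real (x q) - real k))"
    proof (cases "x p \<le> x q")
      case True
      then have "x p choose k \<le> x q choose k" by (rule binomial_right_mono)
      then show ?thesis using True by (intro mult_nonpos_nonpos) auto
    next
      case False
      then have "x q choose k \<le> x p choose k" by (intro binomial_right_mono) simp
      then show ?thesis using False by (intro mult_nonneg_nonneg) auto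
    qed
  qed
  have "(\<Sum>p\<in>P. real (x p choose k) * (real (x p) - real k)) \<ge> (\<Sum>p\<in>P. real (x p choose k)) * (s - real k)"
    using ch N unfolding sumb by (simp add: mult.assoc mult.left_commute[of "real (card P)"])
  moreover have "(\<Sum>p\<in>P. real (x p choose k)) * (s - real k) \<ge> real (card P) * (\<Prod>i<k. (s - real i) / (real i + 1)) * (s - real k)"
    using IH sk by (rule mult_right_mono)
  moreover have "(\<Sum>p\<in>P. real (x p choose (k+1)) * (real k + 1)) = (\<Sum>p\<in>P. real (x p choose k) * (real (x p) - real k))"
    by (intro sum.cong refl) (rule binom_rec)
  ultimately have "(\<Sum>p\<in>P. real (x p choose (k+1)) * (real k + 1)) \<ge> real (card P) * (\<Prod>i<k. (s - real i) / (real i + 1)) * (s - real k)"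
    by linarith
  then have "(\<Sum>p\<in>P. real (x p choose (k+1))) * (real k + 1) \<ge> real (card P) * (\<Prod>i<k. (s - real i) / (real i + 1)) * (s - real k)"
    by (simp add: sum_distrib_right)
  then show ?case by (simp add: field_simps)
qed




lemma mindeg_sub:
  fixes G :: "('a \<times> 'a) set"
  assumes sym: "\<And>x y. (x, y) \<in> G \<Longrightarrow> (y, x) \<in> G"
  shows "finite A \<Longrightarrow> card (G \<inter> A \<times> A) > 2 * k * card A \<Longrightarrow>
     \<exists>A'\<subseteq>A. A' \<noteq> {} \<and> (\<forall>v\<in>A'. card {w\<in>A'. (v, w) \<in> G} \<ge> k + 1)"
proof (induction "card A" arbitrary: A rule: less_induct)
  case less
  have "A \<noteq> {}" using less.prems by auto
  show ?case
  proof (cases "\<forall>v\<in>A. card {w\<in>A. (v, w) \<in> G} \<ge> k + 1")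
    case True
    then show ?thesis using \<open>A \<noteq> {}\<close> by blast
  next
    case False
    then obtain v where v: "v \<in> A" "card {w\<in>A. (v, w) \<in> G} \<le> k" by force
    define Nv where "Nv = {w\<in>A. (v, w) \<in> G}"
    define A1 where "A1 = A - {v}"
    have fin1: "finite A1" using less.prems A1_def by simp
    have cA1: "card A1 = card A - 1" using v(1) less.prems by (simp add: A1_def)
    have sub: "G \<inter> A \<times> A \<subseteq> (G \<inter> A1 \<times> A1) \<union> ({v} \<times> Nv) \<union> (Nv \<times> {v})"
      using sym by (auto simp: A1_def Nv_def)
    have "card (G \<inter> A \<times> A) \<le> card ((G \<inter> A1 \<times> A1) \<union> ({v} \<times> Nv) \<union> (Nv \<times> {v}))"
      by (rule card_mono[OF _ sub]) (use less.prems fin1 in \<open>auto simp: Nv_def\<close>)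
    also have "\<dots> \<le> card (G \<inter> A1 \<times> A1) + card ({v} \<times> Nv) + card (Nv \<times> {v})"
      by (meson card_Un_le le_trans add_le_mono order_refl)
    also have "\<dots> \<le> card (G \<inter> A1 \<times> A1) + 2 * k"
      using v(2) by (simp add: Nv_def card_cartesian_product)
    finally have "card (G \<inter> A \<times> A) \<le> card (G \<inter> A1 \<times> A1) + 2 * k" .
    then have "card (G \<inter> A1 \<times> A1) > 2 * k * card A1"
    proof -
      have c1: "card A = card A1 + 1" using cA1 \<open>A \<noteq> {}\<close> less.prems(1) by (simp add: card_gt_0_iff)
      have "2 * k * card A = 2 * k * card A1 + 2 * k" unfolding c1 by (simp add: algebra_simps)
      then show ?thesis using less.prems(2) \<open>card (G \<inter> A \<times> A) \<le> card (G \<inter> A1 \<times> A1) + 2 * k\<close> by linarith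
    qed
    moreover have "card A1 < card A" using cA1 \<open>A \<noteq> {}\<close> less.prems(1) by (simp add: card_gt_0_iff)
    ultimately obtain A' where "A' \<subseteq> A1" "A' \<noteq> {}" "\<forall>v\<in>A'. card {w\<in>A'. (v, w) \<in> G} \<ge> k + 1"
      using less.hyps fin1 by blast
    then show ?thesis unfolding A1_def by blast
  qed
qed

lemma greedy_path:
  fixes G :: "('a \<times> 'a) set"
  assumes fin: "finite A'" and ne: "A' \<noteq> {}" and irr: "\<And>x. (x, x) \<notin> G"
    and deg: "\<forall>v\<in>A'. card {w\<in>A'. (v, w) \<in> G} \<ge> L"
  shows "1 \<le> j \<Longrightarrow> j \<le> L + 1 \<Longrightarrow> \<exists>xs. length xs = j \<and> distinct xs \<and> set xs \<subseteq> A' \<and>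
            (\<forall>i. i + 1 < j \<longrightarrow> (xs ! i, xs ! (i + 1)) \<in> G)"
proof (induction j)
  case 0 then show ?case by simp
next
  case (Suc j)
  show ?case
  proof (cases "j = 0")
    case True
    obtain v where "v \<in> A'" using ne by blast
    then show ?thesis using True by (intro exI[of _ "[v]"]) auto
  next
    case False
    then obtain xs where xs: "length xs = j" "distinct xs" "set xs \<subseteq> A'"
        "\<forall>i. i + 1 < j \<longrightarrow> (xs ! i, xs ! (i + 1)) \<in> G"
      using Suc by auto
    define v where "v = last xs"
    have "xs \<noteq> []" using False xs(1) by auto
    then have vin: "v \<in> set xs" by (simp add: v_def)
    define Nv where "Nv = {w\<in>A'. (v, w) \<in> G}"
    have "card Nv \<ge> L" using deg vin xs(3) by (auto simp: Nv_def)
    have "\<not> Nv \<subseteq> set xs"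
    proof
      assume "Nv \<subseteq> set xs"
      then have "Nv \<subseteq> set xs - {v}" using irr by (auto simp: Nv_def)
      then have "card Nv \<le> card (set xs - {v})" by (intro card_mono) auto
      also have "\<dots> = j - 1" using vin xs(1,2) by (simp add: distinct_card)
      finally show False using \<open>card Nv \<ge> L\<close> Suc.prems False by linarith
    qed
    then obtain w where w: "w \<in> A'" "(v, w) \<in> G" "w \<notin> set xs" by (auto simp: Nv_def)
    have "\<forall>i. i + 1 < Suc j \<longrightarrow> ((xs @ [w]) ! i, (xs @ [w]) ! (i + 1)) \<in> G"
    proof (intro allI impI)
      fix i assume i: "i + 1 < Suc j"
      show "((xs @ [w]) ! i, (xs @ [w]) ! (i + 1)) \<in> G"
      proof (cases "i + 1 < j")
        case True then show ?thesis using xs by (simp add: nth_append)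
      next
        case False
        then have "i = j - 1" using i by simp
        moreover have "j > 0" using xs(1) \<open>xs \<noteq> []\<close> by (metis length_greater_0_conv)
        ultimately show ?thesis using w(2) xs(1) \<open>xs \<noteq> []\<close>
          by (simp add: nth_append v_def last_conv_nth)
      qed
    qed
    then show ?thesis using xs w by (intro exI[of _ "xs @ [w]"]) auto
  qed
qed




lemma binom_prod: "real (m choose k) = (\<Prod>i<k. (real m - real i) / (real i + 1))"
proof (induction k)
  case 0 then show ?case by simp
next
  case (Suc k)
  have "real (m choose (k+1)) = real (m choose k) * (real m - real k) / (real k + 1)"
    using binom_rec[of m k] by (simp add: field_simps)
  then show ?case using Suc by simp
qed

lemma fact_ratio: "d \<ge> 1 \<Longrightarrow> exp 1 * real d ^ d \<le> exp (real d) * fact d"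
proof (induction d rule: dec_induct)
  case base then show ?case by simp
next
  case (step d)
  have dpos: "real d > 0" using step by simp
  have "1 + 1 / real d \<le> exp (1 / real d)" by (rule exp_ge_add_one_self)
  then have "(1 + 1 / real d) ^ d \<le> exp (1 / real d) ^ d" by (intro power_mono) (use dpos in auto)
  also have "\<dots> = exp 1" using dpos by (simp add: exp_of_nat_mult[symmetric])
  finally have e: "(1 + 1 / real d) ^ d \<le> exp 1" .
  have "(real d + 1) ^ d = real d ^ d * (1 + 1 / real d) ^ d"
    using dpos by (simp add: power_mult_distrib[symmetric] field_simps)
  also have "\<dots> \<le> real d ^ d * exp 1" using e by (intro mult_left_mono) auto
  finally have A: "(real d + 1) ^ d \<le> real d ^ d * exp 1" .
  have "exp 1 * real (Suc d) ^ Suc d = exp 1 * (real d + 1) * (real d + 1) ^ d" by (simp add: add.commute)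
  also have "\<dots> \<le> exp 1 * (real d + 1) * (real d ^ d * exp 1)"
    using A by (intro mult_left_mono) auto
  also have "\<dots> = exp 1 * (real d + 1) * (exp 1 * real d ^ d)" by simp
  also have "\<dots> \<le> exp 1 * (real d + 1) * (exp (real d) * fact d)"
    using step.IH by (intro mult_left_mono) auto
  also have "\<dots> = exp (real (Suc d)) * fact (Suc d)"
    by (simp add: exp_add field_simps)
  finally show ?case .
qed

lemma fact_ratio2: "d \<ge> 1 \<Longrightarrow> exp 1 / exp (real d) \<le> fact d / real d ^ d"
proof -
  assume d: "d \<ge> 1"
  have "exp 1 * real d ^ d \<le> exp (real d) * fact d" using fact_ratio[OF d] .
  moreover have "real d ^ d > 0" using d by simp
  moreover have "exp (real d) > 0" by simp
  ultimately show ?thesis by (simp add: divide_simps mult.commute)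
qed

lemma prod_ratio:
  fixes \<eta> s m :: real
  assumes "0 < \<eta>" "real d \<le> \<eta> * m" "\<eta> * m \<le> s" "\<eta> \<le> 1"
  shows "(\<Prod>i<d. (s - real i) / (m - real i)) \<ge> \<eta> ^ d * fact d / real d ^ d"
proof -
  have "(\<Prod>i<d. \<eta> * (real d - real i) / real d) \<le> (\<Prod>i<d. (s - real i) / (m - real i))"
  proof (rule prod_mono)
    fix i assume "i \<in> {..<d}"
    then have i: "real i < real d" by simp
    have m0: "m \<ge> 0" using assms by (smt (verit) of_nat_0_le_iff zero_le_mult_iff)
    have "\<eta> * m \<le> 1 * m" using m0 assms(4) by (intro mult_right_mono) auto
    then have md: "m \<ge> real d" using assms(2) by linarith
    then have mpos: "m - real i > 0" using i by simp
    have dpos: "real d > 0" using i by simp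
    have "\<eta> * (real d - real i) / real d \<le> (s - real i) / (m - real i)"
    proof -
      have "\<eta> * (real d - real i) * (m - real i) \<le> (s - real i) * real d"
      proof -
        have "\<eta> * (real d - real i) * (m - real i) = real d * (\<eta> * m) - real i * \<eta> * (real d + m - real i)"
          by (simp add: algebra_simps)
        also have "\<dots> \<le> real d * (\<eta> * m) - real i * real d"
        proof -
          have "\<eta> * (real d - real i) \<ge> 0" using assms i by simp
          moreover have "\<eta> * (real d + m - real i) = \<eta> * (real d - real i) + \<eta> * m" by (simp add: algebra_simps)
          ultimately have "\<eta> * (real d + m - real i) \<ge> real d" using assms(2) by linarith
          then have "real i * \<eta> * (real d + m - real i) \<ge> real i * real d"
            by (metis mult.assoc mult_left_mono of_nat_0_le_iff)
          then show ?thesis by linarith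
        qed
        also have "\<dots> \<le> (s - real i) * real d"
        proof -
          have "real d * (\<eta> * m) \<le> real d * s" using assms(3) dpos by (intro mult_left_mono) auto
          then show ?thesis by (simp add: algebra_simps)
        qed
        finally show ?thesis .
      qed
      then show ?thesis using mpos dpos by (simp add: field_simps)
    qed
    moreover have "0 \<le> \<eta> * (real d - real i) / real d" using assms i by auto
    ultimately show "0 \<le> \<eta> * (real d - real i) / real d \<and>
        \<eta> * (real d - real i) / real d \<le> (s - real i) / (m - real i)" by simp
  qed
  moreover have "(\<Prod>i<d. \<eta> * (real d - real i) / real d) = \<eta> ^ d * fact d / real d ^ d"
  proof -
    have "(\<Prod>i<d. real d - real i) = fact d"
      by (simp add: fact_prod_rev lessThan_atLeast0 of_nat_diff)
    then show ?thesis by (simp add: prod_dividef prod.distrib)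
  qed
  ultimately show ?thesis by simp
qed



lemma dm3: "(k::nat) = 3 * (k div 3) + k mod 3" by simp
lemma t1: "k < 3 * d + 2 \<Longrightarrow> (k::nat) mod 3 = 2 \<Longrightarrow> k div 3 < d" using dm3[of k] by linarith
lemma t3: "(k::nat) mod 3 = 2 \<Longrightarrow> k' mod 3 = 2 \<Longrightarrow> k div 3 = k' div 3 \<Longrightarrow> k = k'" using dm3[of k] dm3[of k'] by metis
lemma lt2: "(k::nat) mod 3 \<noteq> 2 \<Longrightarrow> k mod 3 < 2"
proof -
  assume "k mod 3 \<noteq> 2"
  moreover have "k mod 3 < 3" by simp
  ultimately show ?thesis by linarith
qed
lemma par2: "(r::nat) < 2 \<Longrightarrow> r' < 2 \<Longrightarrow> 2 * q + r = 2 * q' + r' \<Longrightarrow> q = q' \<and> r = r'"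
proof -
  assume a: "r < 2" "r' < 2" "2 * q + r = 2 * q' + r'"
  have "(2 * q + r) mod 2 = r" using a(1) by simp
  have "(2 * q' + r') mod 2 = r'" using a(2) by simp
  then have "r = r'" using a(3) \<open>(2 * q + r) mod 2 = r\<close> by metis
  then show ?thesis using a(3) by simp
qed

lemma t2: "(k::nat) mod 3 \<noteq> 2 \<Longrightarrow> k' mod 3 \<noteq> 2 \<Longrightarrow> 2 * (k div 3) + k mod 3 = 2 * (k' div 3) + k' mod 3 \<Longrightarrow> k = k'"
proof -
  assume a: "(k::nat) mod 3 \<noteq> 2" "k' mod 3 \<noteq> 2" "2 * (k div 3) + k mod 3 = 2 * (k' div 3) + k' mod 3"
  have "k mod 3 < 2" "k' mod 3 < 2" using a(1,2) lt2 by auto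
  then have "k div 3 = k' div 3 \<and> k mod 3 = k' mod 3" using a(3) par2 by blast
  then show ?thesis using dm3[of k] dm3[of k'] by metis
qed
lemma t4: "k < 3 * d + 2 \<Longrightarrow> (k::nat) mod 3 \<noteq> 2 \<Longrightarrow> 2 * (k div 3) + k mod 3 < 2 * d + 2"
proof -
  assume a: "k < 3 * d + 2" "(k::nat) mod 3 \<noteq> 2"
  have "k mod 3 < 2" using a(2) lt2 by auto
  then show ?thesis using a(1) dm3[of k] by linarith
qed



lemma divdiv: "(c::real) \<noteq> 0 \<Longrightarrow> (a / c) / (b / c) = a / b"
  by (simp add: divide_divide_eq_left divide_divide_eq_right)

theorem lemma5p5:
  fixes \<eta> :: real and d :: nat and V :: "'a set" and E :: "'a set set" and A B :: "'a set"
  assumes "0 < \<eta>" "\<eta> \<le> 1" "d \<ge> 1"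
    and "three_graph V E"
    and "A \<subseteq> V" "B \<subseteq> V" "A \<inter> B = {}"
    and "real (card A) \<ge> 4 * real d * exp (real d) / \<eta> ^ d"
    and "real (card B) \<ge> real d / \<eta>"
    and "clique3 E A"
    and "density3 E A A B \<ge> \<eta>"
  shows "\<exists>vs. length vs = 3 * d + 2 \<and> tight_path E vs \<and>
           (\<forall>k < 3 * d + 2. (k mod 3 = 2 \<longrightarrow> vs ! k \<in> B) \<and> (k mod 3 \<noteq> 2 \<longrightarrow> vs ! k \<in> A))"
proof -
  note eta = assms(1,2) and d1 = assms(3) and disj = assms(7)
  have finA: "finite A" and finB: "finite B"
    using assms(4,5,6) finite_subset unfolding three_graph_def by blast+
  define n where "n = card A"
  define m where "m = card B"
  have etad: "\<eta> ^ d > 0" "\<eta> ^ d \<le> 1" using eta by (auto simp: power_le_one)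
  have ed: "exp (real d) \<ge> exp 1" using d1 by simp
  have nbound: "real n * \<eta> ^ d \<ge> 4 * real d * exp (real d)"
    using assms(8) etad by (simp add: n_def field_simps)
  have "4 * real d * exp (real d) \<ge> 4 * 1 * exp 1"
    using d1 ed by (intro mult_mono) auto
  moreover have e2: "exp (1::real) > 2" using exp_ge_add_one_self[of 1]
    by (smt (verit) exp_gt_zero exp_less_cancel_iff exp_ln ln_2_less_1)
  ultimately have "real n * \<eta> ^ d > 8" using nbound by linarith
  moreover have "real n * \<eta> ^ d \<le> real n * 1" by (rule mult_left_mono) (use etad in auto)
  ultimately have n2: "n \<ge> 2" by linarith
  have mbound: "\<eta> * real m \<ge> real d" using assms(9) eta by (simp add: m_def field_simps)
  define P where "P = {(x, y). x \<in> A \<and> y \<in> A \<and> x \<noteq> y}"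
  have P_Sig: "P = (SIGMA x:A. A - {x})" by (auto simp: P_def)
  have finP: "finite P" unfolding P_Sig using finA by auto
  have cardP: "card P = n * (n - 1)"
    unfolding P_Sig using finA by (simp add: card_SigmaI n_def)
  define D where "D p = {b\<in>B. {fst p, snd p, b} \<in> E}" for p
  define fm where "fm = (\<lambda>(p :: 'a \<times> 'a, b :: 'a). (fst p, snd p, b))"
  have injfm: "inj fm" by (auto simp: fm_def inj_def)
  have dt: "dist_triples A A B = fm ` (P \<times> B)"
  proof
    show "dist_triples A A B \<subseteq> fm ` (P \<times> B)"
    proof
      fix t assume "t \<in> dist_triples A A B"
      then obtain x y z where "t = (x, y, z)" "x \<in> A" "y \<in> A" "z \<in> B" "x \<noteq> y"
        by (auto simp: dist_triples_def)
      then show "t \<in> fm ` (P \<times> B)" by (intro image_eqI[of _ _ "((x, y), z)"]) (auto simp: fm_def P_def)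
    qed
  next
    show "fm ` (P \<times> B) \<subseteq> dist_triples A A B" using disj by (auto simp: fm_def P_def dist_triples_def)
  qed
  have et: "edge_triples E A A B = fm ` (SIGMA p:P. D p)"
  proof
    show "edge_triples E A A B \<subseteq> fm ` (SIGMA p:P. D p)"
    proof
      fix t assume "t \<in> edge_triples E A A B"
      then obtain x y z where "t = (x, y, z)" "x \<in> A" "y \<in> A" "z \<in> B" "x \<noteq> y" "{x, y, z} \<in> E"
        by (auto simp: dist_triples_def edge_triples_def)
      then show "t \<in> fm ` (SIGMA p:P. D p)" by (intro image_eqI[of _ _ "((x, y), z)"]) (auto simp: fm_def P_def D_def)
    qed
  next
    show "fm ` (SIGMA p:P. D p) \<subseteq> edge_triples E A A B"
      using disj by (auto simp: fm_def P_def D_def dist_triples_def edge_triples_def)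
  qed
  have finD: "finite (D p)" for p using finB by (simp add: D_def)
  have card_dt: "card (dist_triples A A B) = card P * m"
    unfolding dt using injfm by (simp add: card_image inj_on_subset card_cartesian_product m_def)
  have card_et: "card (edge_triples E A A B) = (\<Sum>p\<in>P. card (D p))"
    unfolding et using injfm finP finD by (simp add: card_image inj_on_subset card_SigmaI)
  have mpos: "m > 0" using mbound d1 eta
    by (metis assms(9) card_gt_0_iff divide_pos_pos finB less_le_trans m_def of_nat_0_less_iff of_nat_le_0_iff not_le zero_less_one less_le_trans)
  have Ppos: "card P > 0" using cardP n2 by simp
  have "real (card (edge_triples E A A B)) \<ge> \<eta> * real (card (dist_triples A A B))"
    using assms(11) card_dt Ppos mpos by (simp add: density3_def field_simps)
  then have sumdeg: "(\<Sum>p\<in>P. real (card (D p))) \<ge> \<eta> * real m * real (card P)"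
    using card_et card_dt by (simp add: algebra_simps)
  define s where "s = (\<Sum>p\<in>P. real (card (D p))) / real (card P)"
  have s_ge: "s \<ge> \<eta> * real m" using sumdeg Ppos by (simp add: s_def field_simps)
  have Pne: "P \<noteq> {}" using Ppos by auto
  have bsb: "(\<Sum>p\<in>P. real (card (D p) choose d)) \<ge> real (card P) * (\<Prod>i<d. (s - real i) / (real i + 1))"
  proof -
    have "real d \<le> s" using s_ge mbound by linarith
    then show ?thesis using binom_sum_bound[OF finP Pne, where x="\<lambda>p. card (D p)" and k=d, folded s_def] by blast
  qed
  define Fam where "Fam = {S. S \<subseteq> B \<and> card S = d}"
  have finFam: "finite Fam" unfolding Fam_def using finB by (auto intro: finite_subset[of _ "Pow B"])
  have cardFam: "card Fam = m choose d" unfolding Fam_def m_def by (rule n_subsets[OF finB])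
  define G where "G S = {p\<in>P. S \<subseteq> D p}" for S
  have swap: "(\<Sum>S\<in>Fam. card (G S)) = (\<Sum>p\<in>P. card (D p) choose d)"
  proof -
    have "(\<Sum>S\<in>Fam. card (G S)) = (\<Sum>S\<in>Fam. \<Sum>p\<in>P. if S \<subseteq> D p then 1 else 0)"
      by (intro sum.cong refl) (simp add: G_def finP sum.If_cases[OF finP] Int_def)
    also have "\<dots> = (\<Sum>p\<in>P. \<Sum>S\<in>Fam. if S \<subseteq> D p then 1 else 0)" by (rule sum.swap)
    also have "\<dots> = (\<Sum>p\<in>P. card (D p) choose d)"
    proof (intro sum.cong refl)
      fix p assume "p \<in> P"
      have "(\<Sum>S\<in>Fam. if S \<subseteq> D p then 1 else 0) = card {S\<in>Fam. S \<subseteq> D p}"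
        using finFam by (simp add: sum.If_cases Int_def)
      also have "{S\<in>Fam. S \<subseteq> D p} = {S. S \<subseteq> D p \<and> card S = d}"
        by (auto simp: Fam_def D_def)
      also have "card \<dots> = card (D p) choose d" by (rule n_subsets[OF finD])
      finally show "(\<Sum>S\<in>Fam. if S \<subseteq> D p then 1 else 0) = card (D p) choose d" .
    qed
    finally show ?thesis .
  qed
  have "\<eta> * real m \<le> 1 * real m" by (rule mult_right_mono) (use eta in auto)
  then have dm: "d \<le> m" using mbound by simp
  have Fpos: "real (card Fam) > 0" using dm cardFam by simp
  have "\<exists>S\<in>Fam. real (card (G S)) * real (card Fam) \<ge> (\<Sum>S\<in>Fam. real (card (G S)))"
  proof (rule ccontr)
    assume "\<not> ?thesis"
    then have lt: "\<And>S. S \<in> Fam \<Longrightarrow> real (card (G S)) * real (card Fam) < (\<Sum>S\<in>Fam. real (card (G S)))"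
      by auto
    have "Fam \<noteq> {}" using Fpos by auto
    then have "(\<Sum>S\<in>Fam. real (card (G S)) * real (card Fam)) < (\<Sum>S'\<in>Fam. (\<Sum>S\<in>Fam. real (card (G S))))"
      using finFam lt by (intro sum_strict_mono) auto
    then show False by (simp add: sum_distrib_left[symmetric] mult.commute)
  qed
  then obtain S where S: "S \<in> Fam" and Sbig0: "real (card (G S)) * real (card Fam) \<ge> real (\<Sum>p\<in>P. card (D p) choose d)"
    using swap by (simp only: of_nat_sum[symmetric]) blast
  have Sbig: "real (card (G S)) * real (card Fam) \<ge> (\<Sum>p\<in>P. real (card (D p) choose d))"
    using Sbig0 by (simp only: of_nat_sum)
  have prm: "(\<Prod>i<d. (real m - real i) / (real i + 1)) > 0"
    using dm by (intro prod_pos) auto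
  have GP: "real (card (G S)) * (\<Prod>i<d. (real m - real i) / (real i + 1)) \<ge> real (card P) * (\<Prod>i<d. (s - real i) / (real i + 1))"
  proof -
    have cf: "real (card Fam) = (\<Prod>i<d. (real m - real i) / (real i + 1))"
      using cardFam binom_prod[of m d] by simp
    show ?thesis using order_trans[OF bsb Sbig[unfolded cf]] .
  qed
  then have "real (card (G S)) \<ge> real (card P) * ((\<Prod>i<d. (s - real i) / (real i + 1)) / (\<Prod>i<d. (real m - real i) / (real i + 1)))"
  proof -
    have "real (card P) * ((\<Prod>i<d. (s - real i) / (real i + 1)) / (\<Prod>i<d. (real m - real i) / (real i + 1)))
       = real (card P) * (\<Prod>i<d. (s - real i) / (real i + 1)) / (\<Prod>i<d. (real m - real i) / (real i + 1))"
      by simp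
    also have "\<dots> \<le> real (card (G S))" using prm GP by (simp add: pos_divide_le_eq)
    finally show ?thesis .
  qed
  also have "(\<Prod>i<d. (s - real i) / (real i + 1)) / (\<Prod>i<d. (real m - real i) / (real i + 1)) = (\<Prod>i<d. (s - real i) / (real m - real i))"
  proof -
    have "(\<Prod>i<d. (s - real i) / (real i + 1)) / (\<Prod>i<d. (real m - real i) / (real i + 1))
        = (\<Prod>i<d. ((s - real i) / (real i + 1)) / ((real m - real i) / (real i + 1)))"
      by (simp add: prod_dividef)
    also have "\<dots> = (\<Prod>i<d. (s - real i) / (real m - real i))"
    proof (intro prod.cong refl)
      fix i assume "i \<in> {..<d}"
      then have "real m - real i \<noteq> 0" "real i + 1 \<noteq> 0" using dm by auto
      then show "((s - real i) / (real i + 1)) / ((real m - real i) / (real i + 1)) = (s - real i) / (real m - real i)"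
        by (rule_tac divdiv) simp
    qed
    finally show ?thesis .
  qed
  finally have G1: "real (card (G S)) \<ge> real (card P) * (\<Prod>i<d. (s - real i) / (real m - real i))" .
  have "(\<Prod>i<d. (s - real i) / (real m - real i)) \<ge> \<eta> ^ d * fact d / real d ^ d"
    using prod_ratio[OF eta(1) mbound s_ge eta(2)] .
  moreover have "fact d / real d ^ d \<ge> exp 1 / exp (real d)"
    using fact_ratio2[OF d1] .
  moreover have "\<eta> ^ d * (fact d / real d ^ d) \<ge> \<eta> ^ d * (exp 1 / exp (real d))"
    by (rule mult_left_mono) (use calculation etad in auto)
  ultimately have X: "(\<Prod>i<d. (s - real i) / (real m - real i)) \<ge> \<eta> ^ d * (exp 1 / exp (real d))"
    by simp
  have "real (card P) * (\<Prod>i<d. (s - real i) / (real m - real i)) \<ge> real (card P) * (\<eta> ^ d * (exp 1 / exp (real d)))"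
    by (rule mult_left_mono[OF X]) simp
  with G1 have GS: "real (card (G S)) \<ge> real (card P) * (\<eta> ^ d * (exp 1 / exp (real d)))"
    by linarith
  have "4 * real d * (real n - 1) * exp 1 = (4 * real d * exp (real d)) * (real n - 1) * exp 1 / exp (real d)"
    by simp
  also have "\<dots> \<le> (real n * \<eta> ^ d) * (real n - 1) * exp 1 / exp (real d)"
    using nbound n2 by (intro divide_right_mono mult_right_mono) auto
  also have "\<dots> = real (card P) * (\<eta> ^ d * (exp 1 / exp (real d)))"
  proof -
    have cP: "real (card P) = real n * (real n - 1)" using cardP n2 by (simp add: of_nat_diff)
    show ?thesis unfolding cP by (simp add: algebra_simps)
  qed
  also have "\<dots> \<le> real (card (G S))" by (rule GS)
  finally have G2: "4 * real d * (real n - 1) * exp 1 \<le> real (card (G S))" .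
  have "(real n - 1) * exp 1 > (real n - 1) * 2"
    using n2 e2 by (intro mult_strict_left_mono) auto
  moreover have "real n \<ge> 2" using n2 by simp
  then have "(real n - 1) * 2 \<ge> real n" by (simp add: algebra_simps)
  ultimately have "(real n - 1) * exp 1 > real n" by (rule order_le_less_trans[rotated])
  then have "4 * real d * ((real n - 1) * exp 1) > 4 * real d * real n"
    using d1 by (intro mult_strict_left_mono) auto
  then have "real (card (G S)) > real (2 * (2 * d) * n)" using G2 by (simp add: algebra_simps)
  then have cardG: "card (G S) > 2 * (2 * d) * card A" unfolding n_def by linarith
  have GA: "G S \<subseteq> A \<times> A" by (auto simp: G_def P_def)
  have Gsym: "(y, x) \<in> G S" if "(x, y) \<in> G S" for x y
    using that by (auto simp: G_def P_def D_def insert_commute)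
  have Girr: "(x, x) \<notin> G S" for x by (auto simp: G_def P_def)
  have "G S \<inter> A \<times> A = G S" using GA by blast
  then obtain A' where A': "A' \<subseteq> A" "A' \<noteq> {}" "\<forall>v\<in>A'. card {w\<in>A'. (v, w) \<in> G S} \<ge> 2 * d + 1"
    using mindeg_sub[of "G S" A "2 * d", OF Gsym finA] cardG by auto
  have finA': "finite A'" using A'(1) finA finite_subset by blast
  obtain as where as: "length as = 2 * d + 2" "distinct as" "set as \<subseteq> A'"
      "\<forall>i. i + 1 < 2 * d + 2 \<longrightarrow> (as ! i, as ! (i + 1)) \<in> G S"
    using greedy_path[OF finA' A'(2) Girr A'(3), of "2 * d + 2"] by auto
  have SB: "S \<subseteq> B" "card S = d" using S by (auto simp: Fam_def)
  obtain bs where bs: "set bs = S" "distinct bs"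
    using finite_distinct_list[OF finite_subset[OF SB(1) finB]] by blast
  have lbs: "length bs = d" using bs SB(2) distinct_card by metis
  define f where "f k = (if k mod 3 = 2 then bs ! (k div 3) else as ! (2 * (k div 3) + k mod 3))" for k
  have fA: "f (3 * j + r) = as ! (2 * j + r)" if "r < 2" for j r
  proof -
    have "(3 * j + r) mod 3 = r" "(3 * j + r) div 3 = j" using that by presburger+
    then show ?thesis using that by (simp add: f_def)
  qed
  have fB: "f (3 * j + 2) = bs ! j" for j
  proof -
    have "(3 * j + 2) mod 3 = 2" "(3 * j + 2) div 3 = j" by presburger+
    then show ?thesis unfolding f_def by (simp only:) simp
  qed
  have asA: "as ! i \<in> A" if "i < 2 * d + 2" for i using that as A'(1) by (metis nth_mem subsetD)
  have bsB: "bs ! j \<in> B" if "j < d" for j using that bs lbs SB(1) by (metis nth_mem subsetD)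
  have bsS: "bs ! j \<in> S" if "j < d" for j using that bs lbs by (metis nth_mem)
  define vs where "vs = map f [0..<3 * d + 2]"
  have vsn: "vs ! k = f k" if "k < 3 * d + 2" for k using that unfolding vs_def by (subst nth_map) (simp_all del: upt_Suc)
  have memb: "(k mod 3 = 2 \<longrightarrow> f k \<in> B) \<and> (k mod 3 \<noteq> 2 \<longrightarrow> f k \<in> A)" if k: "k < 3 * d + 2" for k
  proof -
    have "k div 3 < d \<or> k mod 3 \<noteq> 2" using k t1 by blast
    moreover have "k mod 3 \<noteq> 2 \<longrightarrow> 2 * (k div 3) + k mod 3 < 2 * d + 2" using k t4 by blast
    ultimately show ?thesis using asA bsB by (auto simp: f_def)
  qed
  have inj: "inj_on f {0..<3 * d + 2}"
  proof
    fix k k' assume k0: "k \<in> {0..<3 * d + 2}" and k0': "k' \<in> {0..<3 * d + 2}" and eq: "f k = f k'"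
    have k: "k < 3 * d + 2" and k': "k' < 3 * d + 2" using k0 k0' by auto
    show "k = k'"
    proof (cases "k mod 3 = 2"; cases "k' mod 3 = 2")
      assume a: "k mod 3 = 2" "k' mod 3 = 2"
      have "k div 3 < d" using k a t1 by blast
      moreover have "k' div 3 < d" using k' a t1 by blast
      moreover have "bs ! (k div 3) = bs ! (k' div 3)" using eq a by (simp add: f_def)
      ultimately have "k div 3 = k' div 3" using bs(2) lbs by (simp add: nth_eq_iff_index_eq)
      then show ?thesis using a t3 by blast
    next
      assume a: "k mod 3 \<noteq> 2" "k' mod 3 \<noteq> 2"
      have "2 * (k div 3) + k mod 3 < 2 * d + 2" using k a t4 by blast
      moreover have "2 * (k' div 3) + k' mod 3 < 2 * d + 2" using k' a t4 by blast
      moreover have "as ! (2 * (k div 3) + k mod 3) = as ! (2 * (k' div 3) + k' mod 3)"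
        using eq a by (simp add: f_def)
      ultimately have "2 * (k div 3) + k mod 3 = 2 * (k' div 3) + k' mod 3"
        using as(1,2) by (simp add: nth_eq_iff_index_eq)
      then show ?thesis using a t2 by blast
    next
      assume a: "k mod 3 = 2" "k' mod 3 \<noteq> 2"
      then have "f k \<in> B" "f k' \<in> A" using memb[OF k] memb[OF k'] by auto
      then show ?thesis using eq disj by auto
    next
      assume a: "k mod 3 \<noteq> 2" "k' mod 3 = 2"
      then have "f k \<in> A" "f k' \<in> B" using memb[OF k] memb[OF k'] by auto
      then show ?thesis using eq disj by auto
    qed
  qed
  have edges: "{f i, f (i + 1), f (i + 2)} \<in> E" if i: "i + 2 < 3 * d + 2" for i
  proof -
    obtain j r where jr: "i = 3 * j + r" "r < 3" by (metis div_mult_mod_eq mod_less_divisor zero_less_numeral add.commute mult.commute)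
    have jd: "j < d" using i jr by linarith
    have bj: "bs ! j \<in> D p" if "p \<in> G S" for p using that bsS[OF jd] by (auto simp: G_def)
    have pr: "(as ! t, as ! (t + 1)) \<in> G S" if "t + 1 < 2 * d + 2" for t using as(4) that by blast
    have E3: "{as ! t, as ! (t + 1), bs ! j} \<in> E" if "t + 1 < 2 * d + 2" for t
      using bj[OF pr[OF that]] by (simp add: D_def)
    consider "r = 0" | "r = 1" | "r = 2" using jr by linarith
    then show ?thesis
    proof cases
      case 1
      then have "f i = as ! (2 * j)" "f (i + 1) = as ! (2 * j + 1)" "f (i + 2) = bs ! j"
        using jr fA[of 0 j] fA[of 1 j] fB[of j] by simp_all
      then show ?thesis using E3[of "2 * j"] jd by simp
    next
      case 2
      have e0: "i = 3 * j + 1" "i + 1 = 3 * j + 2" "i + 2 = 3 * (j + 1) + 0" "2 * (j + 1) + 0 = 2 * j + 2"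
        using jr 2 by simp_all
      have "f i = as ! (2 * j + 1)" unfolding e0(1) by (rule fA) simp
      moreover have "f (i + 1) = bs ! j" unfolding e0(2) by (rule fB)
      moreover have "f (i + 2) = as ! (2 * j + 2)" unfolding e0(3) e0(4)[symmetric] by (rule fA) simp
      ultimately have "f i = as ! (2 * j + 1)" "f (i + 1) = bs ! j" "f (i + 2) = as ! (2 * j + 2)" by auto
      moreover have "2 * j + 1 + 1 < 2 * d + 2" using jd by simp
      then have "{as ! (2 * j + 1), as ! (2 * j + 2), bs ! j} \<in> E" using E3[of "2 * j + 1"] by simp
      moreover have "{as ! (2 * j + 1), bs ! j, as ! (2 * j + 2)} = {as ! (2 * j + 1), as ! (2 * j + 2), bs ! j}" by blast
      ultimately show ?thesis by simp
    next
      case 3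
      have e0: "i = 3 * j + 2" "i + 1 = 3 * (j + 1) + 0" "i + 2 = 3 * (j + 1) + 1"
          "2 * (j + 1) + 0 = 2 * j + 2" "2 * (j + 1) + 1 = 2 * j + 3"
        using jr 3 by simp_all
      have "f i = bs ! j" unfolding e0(1) by (rule fB)
      moreover have "f (i + 1) = as ! (2 * j + 2)" unfolding e0(2) e0(4)[symmetric] by (rule fA) simp
      moreover have "f (i + 2) = as ! (2 * j + 3)" unfolding e0(3) e0(5)[symmetric] by (rule fA) simp
      ultimately have "f i = bs ! j" "f (i + 1) = as ! (2 * j + 2)" "f (i + 2) = as ! (2 * j + 3)" by auto
      moreover have "2 * j + 2 + 1 < 2 * d + 2" using jd by simp
      then have X: "{as ! (2 * j + 2), as ! (2 * j + 2 + 1), bs ! j} \<in> E" by (rule E3)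
      have e3: "2 * j + 2 + 1 = 2 * j + 3" by simp
      have "{as ! (2 * j + 2), as ! (2 * j + 3), bs ! j} \<in> E" using X unfolding e3 .
      moreover have "{bs ! j, as ! (2 * j + 2), as ! (2 * j + 3)} = {as ! (2 * j + 2), as ! (2 * j + 3), bs ! j}" by blast
      ultimately show ?thesis by simp
    qed
  qed
  show ?thesis
  proof (intro exI[of _ vs] conjI allI impI)
    show "length vs = 3 * d + 2" by (simp add: vs_def)
    show "tight_path E vs"
      unfolding tight_path_def
    proof (intro conjI allI impI)
      show "distinct vs" unfolding vs_def using inj by (simp add: distinct_map del: upt_Suc)
      fix i assume "i + 2 < length vs"
      then have "i + 2 < 3 * d + 2" by (simp add: vs_def)
      then show "{vs ! i, vs ! (i + 1), vs ! (i + 2)} \<in> E" using edges[of i] vsn by simp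
    qed
  next
    fix k assume "k < 3 * d + 2" "k mod 3 = 2"
    then show "vs ! k \<in> B" using memb vsn by simp
  next
    fix k assume "k < 3 * d + 2" "k mod 3 \<noteq> 2"
    then show "vs ! k \<in> A" using memb vsn by simp
  qed
qed


end
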